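(* Let $X\in\mathbb R^{n\times d}$ ($d\ge n$) with $XX^\top$ nonsingular, $\Sigma$ symmetric positive definite, $\sigma>0$, and $\rho\in D:=\{\rho\ge0:\Sigma-\frac\rho dX^\top X\succ0\}$. Then $$\mathcal P(A(\rho,\Sigma);\Sigma)-\mathcal P(A(0,\Sigma);\Sigma)=\frac{\rho^2\sigma^4}{d}\mathrm{Tr}\Big(\big(\Sigma-\tfrac\rho dX^\top X\big)^{-1}\Sigma\big(\Sigma-\tfrac\rho dX^\top X\big)^{-1}X^\top X(X^\top X+d\sigma^2I)^{-1}\Big),$$ and $$\mathcal T(A(\rho,\Sigma);\Sigma)=\frac{d\sigma^4}{n}\mathrm{Tr}\Big(\Sigma\big(\Sigma-\tfrac\rho dX^\top X\big)^{-1}X^\top X\big(\Sigma-\tfrac\rho dX^\top X\big)^{-1}\Sigma(X^\top X)^\dagger(X^\top X+d\sigma^2I)^{-1}\Big).$$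
   Context: $\mathcal P(A;\Sigma):=\frac1d\|\Sigma^{1/2}(AX-I)\|_F^2+\sigma^2\|\Sigma^{1/2}A\|_F^2$, $\mathcal T(A;\Sigma):=\frac1{nd}\|XAX-X\|_F^2+\frac{\sigma^2}{n}\|XA-I\|_F^2$, and $A(\rho,\Sigma):=\big(I-\rho\sigma^2(\Sigma-\frac\rho dX^\top X)^{-1}\big)(X^\top X+d\sigma^2I)^{-1}X^\top$. $(\cdot)^\dagger$ is the Moore–Penrose pseudoinverse. *)

theory Defs
  imports "HOL-Analysis.Analysis"
begin

text \<open>Real matrices are rendered as \<open>real^'c^'r\<close> (r rows, c columns).\<close>

definition sym_mat :: "real^'n^'n \<Rightarrow> bool" where
  "sym_mat M \<longleftrightarrow> transpose M = M"

definition pos_def :: "real^'n^'n \<Rightarrow> bool" where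
  "pos_def M \<longleftrightarrow> sym_mat M \<and> (\<forall>x. x \<noteq> 0 \<longrightarrow> x \<bullet> (M *v x) > 0)"

definition pos_semidef :: "real^'n^'n \<Rightarrow> bool" where
  "pos_semidef M \<longleftrightarrow> sym_mat M \<and> (\<forall>x. x \<bullet> (M *v x) \<ge> 0)"

definition mat_sqrt :: "real^'n^'n \<Rightarrow> real^'n^'n" where
  "mat_sqrt M = (THE R. pos_semidef R \<and> R ** R = M)"

definition frob_norm :: "real^'c^'r \<Rightarrow> real" where
  "frob_norm M = sqrt (\<Sum>i\<in>UNIV. \<Sum>j\<in>UNIV. (M $ i $ j)\<^sup>2)"

definition pinv :: "real^'c^'r \<Rightarrow> real^'r^'c" where
  "pinv M = (THE B. M ** B ** M = M \<and> B ** M ** B = B \<and>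
                    transpose (M ** B) = M ** B \<and> transpose (B ** M) = B ** M)"

definition riskP :: "real \<Rightarrow> real^'d^'n \<Rightarrow> real^'n^'d \<Rightarrow> real^'d^'d \<Rightarrow> real" where
  "riskP \<sigma> X A \<Sigma> =
     (1 / real CARD('d)) * (frob_norm (mat_sqrt \<Sigma> ** (A ** X - mat 1)))\<^sup>2
     + \<sigma>\<^sup>2 * (frob_norm (mat_sqrt \<Sigma> ** A))\<^sup>2"

definition riskT :: "real \<Rightarrow> real^'d^'n \<Rightarrow> real^'n^'d \<Rightarrow> real^'d^'d \<Rightarrow> real" where
  "riskT \<sigma> X A \<Sigma> =
     (1 / (real CARD('n) * real CARD('d))) * (frob_norm (X ** A ** X - X))\<^sup>2
     + (\<sigma>\<^sup>2 / real CARD('n)) * (frob_norm (X ** A - mat 1))\<^sup>2"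

definition Aopt :: "real \<Rightarrow> real^'d^'n \<Rightarrow> real \<Rightarrow> real^'d^'d \<Rightarrow> real^'n^'d" where
  "Aopt \<sigma> X \<rho> \<Sigma> =
     (mat 1 - (\<rho> * \<sigma>\<^sup>2) *\<^sub>R matrix_inv (\<Sigma> - (\<rho> / real CARD('d)) *\<^sub>R (transpose X ** X)))
     ** matrix_inv (transpose X ** X + (real CARD('d) * \<sigma>\<^sup>2) *\<^sub>R mat 1) ** transpose X"

end

theory Submission
  imports Defs
begin


lemma matrix_add_rdistrib': "((B + C) ** A) = (B ** A) + (C ** A)"
  by (vector matrix_matrix_mult_def sum.distrib[symmetric] field_simps)
lemma matrix_diff_ldistrib: "(A ** (B - C)) = (A ** B) - (A ** (C::'a::ring_1^_^_))"
  by (vector matrix_matrix_mult_def sum_subtractf[symmetric] field_simps)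
lemma matrix_diff_rdistrib: "((B - C) ** A) = (B ** A) - (C ** (A::'a::ring_1^_^_))"
  by (vector matrix_matrix_mult_def sum_subtractf[symmetric] field_simps)
lemma transpose_add: "transpose (A + B) = transpose A + transpose (B::'a::semiring_1^_^_)"
  by (simp add: transpose_def vec_eq_iff)
lemma transpose_diff: "transpose (A - B) = transpose A - transpose (B::'a::ring_1^_^_)"
  by (simp add: transpose_def vec_eq_iff)
lemma trace_scaleR: "trace (k *\<^sub>R (A::real^'n^'n)) = k * trace A"
  by (simp add: trace_def sum_distrib_left)
lemma trace_transpose: "trace (transpose (A::'a::semiring_1^'n^'n)) = trace A"
  by (simp add: trace_def transpose_def)
lemma mat1_scaleR: "k *\<^sub>R (mat 1 :: real^'n^'n) = mat k"
  by (simp add: mat_def vec_eq_iff)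


lemma frob_sq: "(frob_norm (Y::real^'c^'r))\<^sup>2 = trace (transpose Y ** Y)"
proof -
  have nn: "0 \<le> (\<Sum>i\<in>UNIV. \<Sum>j\<in>UNIV. (Y $ i $ j)\<^sup>2)"
    by (intro sum_nonneg) simp
  have "(frob_norm Y)\<^sup>2 = (\<Sum>i\<in>UNIV. \<Sum>j\<in>UNIV. (Y $ i $ j)\<^sup>2)"
    unfolding frob_norm_def using nn by (rule real_sqrt_pow2)
  also have "\<dots> = (\<Sum>j\<in>UNIV. \<Sum>i\<in>UNIV. (Y $ i $ j)\<^sup>2)" by (rule sum.swap)
  also have "\<dots> = trace (transpose Y ** Y)"
    unfolding trace_def by (simp add: matrix_matrix_mult_def transpose_def power2_eq_square)
  finally show ?thesis .
qed

lemma frob_sq': "(frob_norm (Y::real^'c^'r))\<^sup>2 = trace (Y ** transpose Y)"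
  using frob_sq[of Y] trace_mul_sym[of "transpose Y" Y] by simp

lemma inv_sym:
  fixes M N :: "real^'n^'n"
  assumes "M ** N = mat 1" "transpose M = M"
  shows "transpose N = N"
proof -
  have NM: "N ** M = mat 1" using assms(1) matrix_left_right_inverse by blast
  have "transpose M ** transpose N = mat 1"
    using arg_cong[OF NM, of transpose] by (simp only: matrix_transpose_mul transpose_mat)
  hence "M ** transpose N = mat 1" using assms(2) by simp
  hence "transpose N ** M = mat 1" using matrix_left_right_inverse by blast
  hence "transpose N = transpose N ** (M ** N)" using assms by simp
  also have "\<dots> = N" by (simp add: matrix_mul_assoc \<open>transpose N ** M = mat 1\<close>)
  finally show ?thesis .
qed

lemma invertible_inv:
  fixes M :: "real^'n^'n"
  assumes "invertible M"
  shows "M ** matrix_inv M = mat 1" "matrix_inv M ** M = mat 1"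
proof -
  have "\<exists>A'. M ** A' = mat 1 \<and> A' ** M = mat 1" using assms unfolding invertible_def by blast
  hence "M ** matrix_inv M = mat 1 \<and> matrix_inv M ** M = mat 1"
    unfolding matrix_inv_def by (rule someI_ex)
  thus "M ** matrix_inv M = mat 1" "matrix_inv M ** M = mat 1" by auto
qed



lemma mm_scaleR_left: "(k *\<^sub>R (A::real^'n^'m)) ** B = k *\<^sub>R (A ** B)"
  by (simp add: scalar_matrix_assoc)
lemma mm_scaleR_right: "(A::real^'n^'m) ** (k *\<^sub>R B) = k *\<^sub>R (A ** B)"
  by (simp add: matrix_scalar_ac scalar_matrix_assoc)

lemma frob_R:
  assumes "transpose R ** R = S"
  shows "(frob_norm (R ** (Z::real^'c^'r)))\<^sup>2 = trace (transpose Z ** S ** Z)"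
proof -
  have "transpose Z ** transpose R ** R ** Z = transpose Z ** (transpose R ** R) ** Z"
    by (simp add: matrix_mul_assoc)
  thus ?thesis unfolding frob_sq matrix_transpose_mul assms by (simp add: matrix_mul_assoc)
qed

lemma riskP_formula:
  fixes X :: "real^'d^'n" and S E K :: "real^'d^'d" and \<sigma> :: real
  defines "G \<equiv> transpose X ** X" and "c \<equiv> real CARD('d) * \<sigma>\<^sup>2"
  assumes R: "transpose (mat_sqrt S) ** mat_sqrt S = S"
    and KG: "K ** (G + c *\<^sub>R mat 1) = mat 1" and GK: "(G + c *\<^sub>R mat 1) ** K = mat 1"
    and Ks: "transpose K = K" and Ss: "transpose S = S"
  shows "real CARD('d) * riskP \<sigma> X (E ** K ** transpose X) S =
     trace (transpose E ** S ** E ** (K ** G)) - 2 * trace (S ** E ** (K ** G)) + trace S"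
proof -
  define F where "F = K ** G"
  have Gs: "transpose G = G" unfolding G_def by (simp add: matrix_transpose_mul)
  have Ft: "transpose F = G ** K" unfolding F_def by (simp add: matrix_transpose_mul Gs Ks)
  have key: "F ** transpose F + c *\<^sub>R (K ** G ** K) = F"
  proof -
    have "F ** transpose F + c *\<^sub>R (K ** G ** K) = K ** G ** ((G + c *\<^sub>R mat 1) ** K)"
      unfolding Ft unfolding F_def
      by (simp add: matrix_add_ldistrib matrix_add_rdistrib' mm_scaleR_left mm_scaleR_right matrix_mul_assoc)
    also have "\<dots> = F" by (simp add: GK F_def)
    finally show ?thesis .
  qed
  have AX: "E ** K ** transpose X ** X = E ** F"
    unfolding F_def G_def by (simp add: matrix_mul_assoc)
  have d0: "real CARD('d) \<noteq> 0" by simp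
  have t1: "(frob_norm (mat_sqrt S ** (E ** K ** transpose X ** X - mat 1)))\<^sup>2
      = trace (transpose E ** S ** E ** (F ** transpose F)) - 2 * trace (S ** E ** F) + trace S"
  proof -
    have "(frob_norm (mat_sqrt S ** (E ** K ** transpose X ** X - mat 1)))\<^sup>2
        = trace (transpose (E ** F - mat 1) ** S ** (E ** F - mat 1))"
      by (simp add: frob_R[OF R] AX)
    also have "transpose (E ** F - mat 1) ** S ** (E ** F - mat 1) =
        transpose F ** (transpose E ** S ** E ** F) - transpose (S ** E ** F) - S ** E ** F + S"
      by (simp add: transpose_diff matrix_transpose_mul matrix_diff_ldistrib matrix_diff_rdistrib matrix_mul_assoc Ss)
    also have "trace \<dots> = trace (transpose E ** S ** E ** (F ** transpose F)) - 2 * trace (S ** E ** F) + trace S"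
      using trace_mul_sym[of "transpose F" "transpose E ** S ** E ** F"]
      by (simp add: trace_add trace_sub trace_transpose matrix_mul_assoc)
    finally show ?thesis .
  qed
  have t2: "(frob_norm (mat_sqrt S ** (E ** K ** transpose X)))\<^sup>2 = trace (transpose E ** S ** E ** (K ** G ** K))"
  proof -
    have "(frob_norm (mat_sqrt S ** (E ** K ** transpose X)))\<^sup>2 =
        trace (transpose (E ** K ** transpose X) ** S ** (E ** K ** transpose X))"
      by (simp add: frob_R[OF R])
    also have "\<dots> = trace (X ** (K ** transpose E ** S ** E ** K ** transpose X))"
      by (simp add: matrix_transpose_mul Ks matrix_mul_assoc)
    also have "\<dots> = trace (K ** transpose E ** S ** E ** K ** transpose X ** X)"
      using trace_mul_sym[of X "K ** transpose E ** S ** E ** K ** transpose X"]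
      by (simp add: matrix_mul_assoc)
    also have "\<dots> = trace (K ** (transpose E ** S ** E ** (K ** G)))"
      by (simp add: G_def matrix_mul_assoc)
    also have "\<dots> = trace (transpose E ** S ** E ** (K ** G ** K))"
      using trace_mul_sym[of K "transpose E ** S ** E ** (K ** G)"]
      by (simp add: matrix_mul_assoc)
    finally show ?thesis .
  qed
  have "real CARD('d) * riskP \<sigma> X (E ** K ** transpose X) S =
      trace (transpose E ** S ** E ** (F ** transpose F)) - 2 * trace (S ** E ** F) + trace S
      + c * trace (transpose E ** S ** E ** (K ** G ** K))"
    unfolding riskP_def t1 t2 c_def using d0 by (simp add: algebra_simps)
  also have "\<dots> = trace (transpose E ** S ** E ** (F ** transpose F + c *\<^sub>R (K ** G ** K))) - 2 * trace (S ** E ** F) + trace S"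
    by (simp add: matrix_add_ldistrib trace_add mm_scaleR_right trace_scaleR)
  also have "\<dots> = trace (transpose E ** S ** E ** (K ** G)) - 2 * trace (S ** E ** (K ** G)) + trace S"
    unfolding key by (simp add: F_def)
  finally show ?thesis .
qed



lemma trace_cyc: "trace ((A::real^'n^'m) ** B) = trace (B ** A)" by (rule trace_mul_sym)

lemma P_diff:
  fixes S N K G :: "real^'d^'d" and t :: real
  defines "E \<equiv> mat 1 - t *\<^sub>R N"
  assumes Ns: "transpose N = N" and Ss: "transpose S = S" and Ks: "transpose K = K"
    and Gs: "transpose G = G" and KG: "K ** G = G ** K"
  shows "(trace (transpose E ** S ** E ** (K ** G)) - 2 * trace (S ** E ** (K ** G)) + trace S)
       - (trace (transpose (mat 1) ** S ** mat 1 ** (K ** G)) - 2 * trace (S ** mat 1 ** (K ** G)) + trace S)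
       = t\<^sup>2 * trace (N ** S ** N ** G ** K)"
proof -
  have Et: "transpose E = E" unfolding E_def by (simp add: transpose_diff transpose_scalar Ns)
  have a: "trace (S ** N ** (K ** G)) = trace (N ** S ** (K ** G))"
  proof -
    have "trace (S ** N ** (K ** G)) = trace (transpose (S ** N ** (K ** G)))" by (simp add: trace_transpose)
    also have "\<dots> = trace (G ** K ** N ** S)" by (simp add: matrix_transpose_mul Ns Ss Ks Gs matrix_mul_assoc)
    also have "\<dots> = trace (K ** G ** N ** S)" by (simp add: KG)
    also have "\<dots> = trace (N ** S ** (K ** G))"
      using trace_cyc[of "K ** G" "N ** S"] by (simp add: matrix_mul_assoc)
    finally show ?thesis .
  qed
  have b: "trace (N ** S ** N ** (K ** G)) = trace (N ** S ** N ** G ** K)"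
    by (simp add: KG matrix_mul_assoc)
  have e1: "E ** S ** E ** (K ** G) = S ** (K ** G) - t *\<^sub>R (S ** N ** (K ** G)) - t *\<^sub>R (N ** S ** (K ** G))
       + (t * t) *\<^sub>R (N ** S ** N ** (K ** G))"
    unfolding E_def
    by (simp add: matrix_diff_ldistrib matrix_diff_rdistrib matrix_add_ldistrib matrix_add_rdistrib' mm_scaleR_left mm_scaleR_right matrix_mul_assoc algebra_simps)
  have e2: "S ** E ** (K ** G) = S ** (K ** G) - t *\<^sub>R (S ** N ** (K ** G))"
    unfolding E_def
    by (simp add: matrix_diff_ldistrib matrix_diff_rdistrib mm_scaleR_left mm_scaleR_right matrix_mul_assoc)
  show ?thesis
    unfolding Et e1 e2
    by (simp add: trace_add trace_sub trace_scaleR a b power2_eq_square algebra_simps)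
qed



lemma mm_uminus_left: "(- (A::real^'n^'m)) ** B = - (A ** B)"
  by (simp add: matrix_matrix_mult_def vec_eq_iff sum_negf)
lemma mm_uminus_right: "(A::real^'n^'m) ** (- B) = - (A ** B)"
  by (simp add: matrix_matrix_mult_def vec_eq_iff sum_negf)
lemma transpose_uminus: "transpose (- (A::real^'n^'m)) = - transpose A"
  by (simp add: transpose_def vec_eq_iff)
lemma trace_uminus: "trace (- (A::real^'n^'n)) = - trace A"
  by (simp add: trace_def sum_negf)

lemma T_formula:
  fixes X :: "real^'d^'n" and S N K :: "real^'d^'d" and V :: "real^'n^'n" and \<sigma> \<rho> :: real
  defines "G \<equiv> transpose X ** X" and "c \<equiv> real CARD('d) * \<sigma>\<^sup>2"
    and "P \<equiv> transpose X ** V ** V ** X"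
  assumes V1: "V ** (X ** transpose X) = mat 1" and V2: "(X ** transpose X) ** V = mat 1"
    and Vs: "transpose V = V"
    and KG: "K ** (G + c *\<^sub>R mat 1) = mat 1" and GK: "(G + c *\<^sub>R mat 1) ** K = mat 1"
    and Ks: "transpose K = K"
    and NM: "N ** (S - (\<rho> / real CARD('d)) *\<^sub>R G) = mat 1"
    and Ns: "transpose N = N" and Ss: "transpose S = S"
  shows "real CARD('n) * real CARD('d) * riskT \<sigma> X ((mat 1 - (\<rho> * \<sigma>\<^sup>2) *\<^sub>R N) ** K ** transpose X) S
     = c\<^sup>2 * trace (S ** N ** G ** N ** S ** P ** K)"
proof -
  define t where "t = \<rho> * \<sigma>\<^sup>2"
  define E where "E = mat 1 - t *\<^sub>R N"
  define A where "A = E ** K ** transpose X"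
  have d0: "real CARD('d) \<noteq> 0" by simp
  have n0: "real CARD('n) \<noteq> 0" by simp
  have Gs: "transpose G = G" unfolding G_def by (simp add: matrix_transpose_mul)
  have Ps: "transpose P = P" unfolding P_def by (simp add: matrix_transpose_mul Vs matrix_mul_assoc)
  have KGc: "K ** G = G ** K"
  proof -
    have "K ** G + c *\<^sub>R K = G ** K + c *\<^sub>R K"
      using KG GK by (simp add: matrix_add_ldistrib matrix_add_rdistrib' mm_scaleR_left mm_scaleR_right)
    thus ?thesis by simp
  qed
  have s1: "G ** P ** transpose X = transpose X"
  proof -
    have "G ** P ** transpose X = transpose X ** ((X ** transpose X) ** V) ** (V ** (X ** transpose X))"
      unfolding G_def P_def by (simp add: matrix_mul_assoc)
    thus ?thesis using V1 V2 by simp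
  qed
  have s2: "E ** G = G + c *\<^sub>R mat 1 - c *\<^sub>R (N ** S)"
  proof -
    have "N ** S - (\<rho> / real CARD('d)) *\<^sub>R (N ** G) = mat 1"
      using NM by (simp add: matrix_diff_ldistrib mm_scaleR_right)
    hence NS: "N ** S = mat 1 + (\<rho> / real CARD('d)) *\<^sub>R (N ** G)" by (simp add: algebra_simps)
    have "c *\<^sub>R (N ** S) = c *\<^sub>R mat 1 + t *\<^sub>R (N ** G)"
      unfolding NS c_def t_def using d0 by (simp add: algebra_simps)
    thus ?thesis unfolding E_def by (simp add: matrix_diff_rdistrib mm_scaleR_left algebra_simps)
  qed
  have s3: "A = P ** transpose X - c *\<^sub>R (N ** S ** K ** P ** transpose X)"
  proof -
    have "A = E ** K ** (G ** P ** transpose X)" unfolding A_def s1 ..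
    also have "\<dots> = E ** (K ** G) ** P ** transpose X" by (simp add: matrix_mul_assoc)
    also have "\<dots> = E ** (G ** K) ** P ** transpose X" by (simp only: KGc)
    also have "\<dots> = (E ** G) ** K ** P ** transpose X" by (simp add: matrix_mul_assoc)
    also have "\<dots> = ((G + c *\<^sub>R mat 1) ** K) ** P ** transpose X - c *\<^sub>R (N ** S ** K ** P ** transpose X)"
      unfolding s2 by (simp add: matrix_diff_rdistrib mm_scaleR_left matrix_mul_assoc)
    finally show ?thesis using GK by simp
  qed
  have s4: "X ** P ** transpose X = mat 1"
  proof -
    have "X ** P ** transpose X = ((X ** transpose X) ** V) ** (V ** (X ** transpose X))"
      unfolding P_def by (simp add: matrix_mul_assoc)
    thus ?thesis using V1 V2 by simp
  qed
  define W where "W = X ** N ** S"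
  define Y where "Y = W ** K ** P ** transpose X"
  have s5: "X ** A - mat 1 = (- c) *\<^sub>R Y"
    unfolding s3 Y_def W_def
    by (simp add: matrix_diff_ldistrib mm_scaleR_right matrix_mul_assoc s4[simplified matrix_mul_assoc])
  have s6: "X ** A ** X - X = (- c) *\<^sub>R (Y ** X)"
  proof -
    have "X ** A ** X - X = (X ** A - mat 1) ** X" by (simp add: matrix_diff_rdistrib)
    thus ?thesis unfolding s5 by (simp add: mm_scaleR_left mm_uminus_left)
  qed
  have Yt: "transpose Y = X ** P ** K ** transpose W"
    unfolding Y_def by (simp add: matrix_transpose_mul Ps Ks matrix_mul_assoc)
  have PG: "P ** G = transpose X ** V ** X"
  proof -
    have "P ** G = transpose X ** V ** (V ** (X ** transpose X)) ** X"
      unfolding P_def G_def by (simp add: matrix_mul_assoc)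
    thus ?thesis using V1 by simp
  qed
  have GP: "G ** P = transpose X ** V ** X"
  proof -
    have "G ** P = transpose X ** ((X ** transpose X) ** V) ** V ** X"
      unfolding P_def G_def by (simp add: matrix_mul_assoc)
    thus ?thesis using V2 by simp
  qed
  have PGGP: "P ** G ** G ** P = G ** P"
  proof -
    have "P ** G ** G ** P = (P ** G) ** (G ** P)" by (simp add: matrix_mul_assoc)
    also have "\<dots> = transpose X ** (V ** (X ** transpose X)) ** V ** X"
      unfolding PG GP by (simp add: matrix_mul_assoc)
    finally show ?thesis using V1 GP by simp
  qed
  have PGP: "P ** G ** P = P"
  proof -
    have "P ** G ** P = (transpose X ** V ** X) ** P" by (simp only: PG)
    also have "\<dots> = transpose X ** (V ** (X ** transpose X)) ** V ** V ** X"
      by (simp add: P_def matrix_mul_assoc)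
    finally show ?thesis using V1 by (simp add: P_def)
  qed
  have core: "Y ** X ** transpose (Y ** X) + c *\<^sub>R (Y ** transpose Y) = W ** P ** K ** transpose W"
  proof -
    have "Y ** X ** transpose (Y ** X) + c *\<^sub>R (Y ** transpose Y)
       = W ** K ** (P ** G ** G ** P + c *\<^sub>R (P ** G ** P)) ** K ** transpose W"
      unfolding matrix_transpose_mul Yt unfolding Y_def G_def
      by (simp add: matrix_add_ldistrib matrix_add_rdistrib' mm_scaleR_left mm_scaleR_right matrix_mul_assoc)
    also have "P ** G ** G ** P + c *\<^sub>R (P ** G ** P) = (G + c *\<^sub>R mat 1) ** P"
      unfolding PGGP PGP by (simp add: matrix_add_rdistrib' mm_scaleR_left)
    also have "W ** K ** ((G + c *\<^sub>R mat 1) ** P) ** K ** transpose W = W ** (K ** (G + c *\<^sub>R mat 1)) ** P ** K ** transpose W"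
      by (simp add: matrix_mul_assoc)
    finally show ?thesis using KG by simp
  qed
  have "real CARD('n) * real CARD('d) * riskT \<sigma> X A S
      = (frob_norm (X ** A ** X - X))\<^sup>2 + c * (frob_norm (X ** A - mat 1))\<^sup>2"
    unfolding riskT_def c_def using d0 n0 by (simp add: field_simps)
  also have "\<dots> = c\<^sup>2 * trace (Y ** X ** transpose (Y ** X) + c *\<^sub>R (Y ** transpose Y))"
    unfolding frob_sq' s5 s6
    by (simp add: transpose_scalar mm_scaleR_left mm_scaleR_right trace_scaleR transpose_uminus mm_uminus_left mm_uminus_right trace_uminus trace_add power2_eq_square algebra_simps)
  also have "\<dots> = c\<^sup>2 * trace (W ** P ** K ** transpose W)" unfolding core ..
  also have "trace (W ** P ** K ** transpose W) = trace (S ** N ** G ** N ** S ** P ** K)"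
  proof -
    have "trace (W ** P ** K ** transpose W) = trace (X ** (N ** S ** P ** K ** S ** N ** transpose X))"
      unfolding W_def by (simp add: matrix_transpose_mul Ns Ss matrix_mul_assoc)
    also have "\<dots> = trace (N ** S ** P ** K ** S ** N ** G)"
      using trace_cyc[of X "N ** S ** P ** K ** S ** N ** transpose X"] by (simp add: G_def matrix_mul_assoc)
    also have "\<dots> = trace (S ** N ** G ** N ** S ** P ** K)"
      using trace_cyc[of "N ** S ** P ** K" "S ** N ** G"] by (simp add: matrix_mul_assoc)
    finally show ?thesis .
  qed
  finally show ?thesis unfolding A_def E_def t_def .
qed



lemma penrose_unique:
  fixes M :: "real^'c^'r" and B C :: "real^'r^'c"
  assumes B1: "M ** B ** M = M" and B2: "B ** M ** B = B"
    and B3: "transpose (M ** B) = M ** B" and B4: "transpose (B ** M) = B ** M"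
    and C1: "M ** C ** M = M" and C2: "C ** M ** C = C"
    and C3: "transpose (M ** C) = M ** C" and C4: "transpose (C ** M) = C ** M"
  shows "B = C"
proof -
  have MBt: "transpose B ** transpose M = M ** B" using B3 by (simp add: matrix_transpose_mul)
  have BMt: "transpose M ** transpose B = B ** M" using B4 by (simp add: matrix_transpose_mul)
  have MCt: "transpose C ** transpose M = M ** C" using C3 by (simp add: matrix_transpose_mul)
  have CMt: "transpose M ** transpose C = C ** M" using C4 by (simp add: matrix_transpose_mul)
  have Mt: "transpose M = transpose M ** transpose C ** transpose M"
    using arg_cong[OF C1, of transpose] by (simp add: matrix_transpose_mul matrix_mul_assoc)
  have Mt': "transpose M = transpose M ** transpose B ** transpose M"
    using arg_cong[OF B1, of transpose] by (simp add: matrix_transpose_mul matrix_mul_assoc)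
  have "B = B ** (M ** B)" using B2 by (simp add: matrix_mul_assoc)
  also have "\<dots> = B ** (transpose B ** transpose M)" by (simp only: MBt)
  also have "\<dots> = B ** transpose B ** transpose M" by (simp add: matrix_mul_assoc)
  also have "\<dots> = B ** transpose B ** (transpose M ** transpose C ** transpose M)" using Mt by simp
  also have "\<dots> = B ** (transpose B ** transpose M) ** (transpose C ** transpose M)" by (simp add: matrix_mul_assoc)
  also have "\<dots> = B ** M ** B ** M ** C" by (simp add: MBt MCt matrix_mul_assoc)
  also have "\<dots> = B ** M ** C" using B2 by simp
  finally have b: "B = B ** M ** C" .
  have "C = (C ** M) ** C" using C2 by (simp add: matrix_mul_assoc)
  also have "\<dots> = transpose M ** transpose C ** C" by (simp add: CMt)
  also have "\<dots> = (transpose M ** transpose B ** transpose M) ** transpose C ** C" using Mt' by simp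
  also have "\<dots> = (transpose M ** transpose B) ** (transpose M ** transpose C) ** C" by (simp add: matrix_mul_assoc)
  also have "\<dots> = B ** M ** (C ** M ** C)" by (simp add: BMt CMt matrix_mul_assoc)
  also have "\<dots> = B ** M ** C" using C2 by simp
  finally have c: "C = B ** M ** C" .
  show ?thesis using b c by simp
qed

lemma pinv_eq:
  fixes M :: "real^'c^'r" and B :: "real^'r^'c"
  assumes "M ** B ** M = M" "B ** M ** B = B"
    "transpose (M ** B) = M ** B" "transpose (B ** M) = B ** M"
  shows "pinv M = B"
  unfolding pinv_def
  apply (rule the_equality)
  using assms apply blast
  using assms penrose_unique by blast

lemma pinv_gram:
  fixes X :: "real^'d^'n" and V :: "real^'n^'n"
  assumes V1: "V ** (X ** transpose X) = mat 1" and V2: "(X ** transpose X) ** V = mat 1"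
    and Vs: "transpose V = V"
  shows "pinv (transpose X ** X) = transpose X ** V ** V ** X"
proof -
  define G where "G = transpose X ** X"
  define P where "P = transpose X ** V ** V ** X"
  have PG: "P ** G = transpose X ** V ** X"
  proof -
    have "P ** G = transpose X ** V ** (V ** (X ** transpose X)) ** X"
      unfolding P_def G_def by (simp add: matrix_mul_assoc)
    thus ?thesis using V1 by simp
  qed
  have GP: "G ** P = transpose X ** V ** X"
  proof -
    have "G ** P = transpose X ** ((X ** transpose X) ** V) ** V ** X"
      unfolding P_def G_def by (simp add: matrix_mul_assoc)
    thus ?thesis using V2 by simp
  qed
  have s: "transpose (transpose X ** V ** X) = transpose X ** V ** X"
    by (simp add: matrix_transpose_mul Vs matrix_mul_assoc)
  have 1: "G ** P ** G = G"
  proof -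
    have "G ** P ** G = transpose X ** (V ** (X ** transpose X)) ** X"
      unfolding GP by (simp add: G_def matrix_mul_assoc)
    thus ?thesis using V1 by (simp add: G_def)
  qed
  have 2: "P ** G ** P = P"
  proof -
    have "P ** G ** P = (transpose X ** V ** X) ** P" by (simp only: PG)
    also have "\<dots> = transpose X ** (V ** (X ** transpose X)) ** V ** V ** X"
      by (simp add: P_def matrix_mul_assoc)
    finally show ?thesis using V1 by (simp add: P_def)
  qed
  have "pinv G = P"
    by (rule pinv_eq) (use 1 2 PG GP s in auto)
  thus ?thesis unfolding G_def P_def .
qed



lemma sym_inner:
  fixes B :: "real^'n^'n"
  assumes "transpose B = B"
  shows "x \<bullet> (B *v y) = y \<bullet> (B *v x)"
proof -
  have "x \<bullet> (B *v y) = (x v* B) \<bullet> y" by (simp add: dot_lmul_matrix)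
  also have "x v* B = transpose B *v x" by simp
  finally show ?thesis using assms by (simp add: inner_commute)
qed

lemma quad_nonneg_zero:
  fixes a b :: real
  assumes "\<forall>s. 0 \<le> 2 * s * a + s\<^sup>2 * b" "0 \<le> b"
  shows "a = 0"
proof (rule ccontr)
  assume a0: "a \<noteq> 0"
  define s where "s = - a / (b + 1)"
  have b1: "b + 1 > 0" using assms(2) by simp
  have "0 \<le> 2 * s * a + s\<^sup>2 * b" using assms(1) by blast
  hence 0: "0 \<le> (b + 1)\<^sup>2 * (2 * s * a + s\<^sup>2 * b)" by simp
  also have e: "s * (b + 1) = - a" unfolding s_def using b1 by simp
  have "(b + 1)\<^sup>2 * (2 * s * a + s\<^sup>2 * b) = 2 * a * (s * (b + 1)) * (b + 1) + (s * (b + 1))\<^sup>2 * b"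
    by (simp add: power2_eq_square algebra_simps)
  also have "\<dots> = - a\<^sup>2 * (b + 2)" unfolding e by (simp add: power2_eq_square algebra_simps)
  also have "\<dots> < 0" using a0 assms(2) by (simp add: mult_pos_pos)
  finally show False using 0 by simp
qed

lemma form_zero:
  fixes B :: "real^'n^'n"
  assumes Bs: "transpose B = B" and W: "subspace W"
    and nn: "\<forall>x\<in>W. 0 \<le> x \<bullet> (B *v x)" and v: "v \<in> W" and v0: "v \<bullet> (B *v v) = 0"
    and w: "w \<in> W"
  shows "w \<bullet> (B *v v) = 0"
proof (rule quad_nonneg_zero)
  show "0 \<le> w \<bullet> (B *v w)" using nn w by blast
  show "\<forall>s. 0 \<le> 2 * s * (w \<bullet> (B *v v)) + s\<^sup>2 * (w \<bullet> (B *v w))"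
  proof
    fix s :: real
    have "v + s *\<^sub>R w \<in> W" using W v w by (simp add: subspace_add subspace_scale)
    hence "0 \<le> (v + s *\<^sub>R w) \<bullet> (B *v (v + s *\<^sub>R w))" using nn by blast
    also have "(v + s *\<^sub>R w) \<bullet> (B *v (v + s *\<^sub>R w)) =
        v \<bullet> (B *v v) + s * (v \<bullet> (B *v w)) + s * (w \<bullet> (B *v v)) + s\<^sup>2 * (w \<bullet> (B *v w))"
      by (simp add: matrix_vector_right_distrib matrix_vector_mult_scaleR inner_add_left inner_add_right
          power2_eq_square algebra_simps)
    also have "v \<bullet> (B *v w) = w \<bullet> (B *v v)" using sym_inner[OF Bs] .
    finally show "0 \<le> 2 * s * (w \<bullet> (B *v v)) + s\<^sup>2 * (w \<bullet> (B *v w))" using v0 by simp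
  qed
qed

lemma max_form:
  fixes A :: "real^'n^'n"
  assumes W: "subspace W" and u: "u \<in> W" "u \<noteq> 0"
  shows "\<exists>v\<in>W. norm v = 1 \<and> (\<forall>x\<in>W. x \<bullet> (A *v x) \<le> (v \<bullet> (A *v v)) * (norm x)\<^sup>2)"
proof -
  let ?K = "sphere 0 1 \<inter> W"
  have cK: "compact ?K" using closed_subspace[OF W] by (intro compact_Int_closed compact_sphere)
  have "u /\<^sub>R norm u \<in> ?K" using u W by (simp add: subspace_scale)
  hence ne: "?K \<noteq> {}" by blast
  have ct: "continuous_on ?K (\<lambda>x. x \<bullet> (A *v x))"
    by (intro continuous_intros)
  obtain v where v: "v \<in> ?K" and vmax: "\<forall>y\<in>?K. y \<bullet> (A *v y) \<le> v \<bullet> (A *v v)"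
    using continuous_attains_sup[OF cK ne ct] by blast
  show ?thesis
  proof (intro bexI conjI ballI)
    show "v \<in> W" "norm v = 1" using v by auto
    fix x assume x: "x \<in> W"
    show "x \<bullet> (A *v x) \<le> (v \<bullet> (A *v v)) * (norm x)\<^sup>2"
    proof (cases "x = 0")
      case True thus ?thesis by simp
    next
      case False
      hence nx: "norm x > 0" by simp
      have "x /\<^sub>R norm x \<in> ?K" using x W False by (simp add: subspace_scale)
      hence "(x /\<^sub>R norm x) \<bullet> (A *v (x /\<^sub>R norm x)) \<le> v \<bullet> (A *v v)" using vmax by blast
      moreover have "(x /\<^sub>R norm x) \<bullet> (A *v (x /\<^sub>R norm x)) = (x \<bullet> (A *v x)) / (norm x)\<^sup>2"
        using False by (simp add: matrix_vector_mult_scaleR power2_eq_square field_simps)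
      ultimately show ?thesis using nx by (simp add: divide_le_eq mult.commute)
    qed
  qed
qed

lemma mat_vec: "mat k *v x = k *\<^sub>R (x::real^'n)"
  apply (vector matrix_vector_mult_def mat_def)
  apply (simp add: if_distrib if_distribR cong del: if_weak_cong)
  done

lemma eig_exists:
  fixes A :: "real^'n^'n"
  assumes As: "transpose A = A" and W: "subspace W" and u: "u \<in> W" "u \<noteq> 0"
    and inv: "\<forall>x\<in>W. A *v x \<in> W"
  shows "\<exists>v\<in>W. norm v = 1 \<and> A *v v = (v \<bullet> (A *v v)) *\<^sub>R v
           \<and> (\<forall>x\<in>W. x \<bullet> (A *v x) \<le> (v \<bullet> (A *v v)) * (norm x)\<^sup>2)"
proof -
  obtain v where v: "v \<in> W" "norm v = 1" and vm: "\<forall>x\<in>W. x \<bullet> (A *v x) \<le> (v \<bullet> (A *v v)) * (norm x)\<^sup>2"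
    using max_form[OF W u] by blast
  define m where "m = v \<bullet> (A *v v)"
  define B where "B = mat m - A"
  have Bs: "transpose B = B" unfolding B_def by (simp add: transpose_diff As)
  have Bx: "B *v x = m *\<^sub>R x - A *v x" for x
    unfolding B_def by (simp add: matrix_vector_mult_diff_rdistrib mat_vec)
  have nn: "\<forall>x\<in>W. 0 \<le> x \<bullet> (B *v x)"
  proof
    fix x assume "x \<in> W"
    hence "x \<bullet> (A *v x) \<le> m * (norm x)\<^sup>2" using vm m_def by blast
    thus "0 \<le> x \<bullet> (B *v x)" by (simp add: Bx inner_diff_right power2_norm_eq_inner)
  qed
  have vv: "v \<bullet> v = 1" using v(2) by (simp add: norm_eq_1)
  have v0: "v \<bullet> (B *v v) = 0" by (simp add: Bx inner_diff_right vv m_def)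
  have BvW: "B *v v \<in> W" using v(1) inv W by (simp add: Bx subspace_diff subspace_scale)
  have "(B *v v) \<bullet> (B *v v) = 0" by (rule form_zero[OF Bs W nn v(1) v0 BvW])
  hence "B *v v = 0" by simp
  hence "A *v v = m *\<^sub>R v" by (simp add: Bx)
  thus ?thesis using v vm m_def by blast
qed



lemma psd_kernel:
  fixes R :: "real^'n^'n"
  assumes "pos_semidef R" "v \<bullet> (R *v v) = 0"
  shows "R *v v = 0"
proof -
  have "(R *v v) \<bullet> (R *v v) = 0"
    by (rule form_zero[of R UNIV]) (use assms in \<open>auto simp: pos_semidef_def sym_mat_def\<close>)
  thus ?thesis by simp
qed

lemma exists_nonzero_vec: "\<exists>u::real^'n. u \<noteq> 0"
  by (rule exI[of _ "axis undefined 1"]) (simp add: axis_eq_0_iff)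

lemma sqrt_half:
  fixes R S :: "real^'n^'n"
  assumes R: "pos_semidef R" and S: "pos_semidef S" and RS: "R ** R = S ** S"
  shows "x \<bullet> ((R - S) *v x) \<le> 0"
proof -
  define D where "D = R - S"
  have Rs: "transpose R = R" and Ss: "transpose S = S" using R S by (auto simp: pos_semidef_def sym_mat_def)
  have Ds: "transpose D = D" unfolding D_def by (simp add: transpose_diff Rs Ss)
  obtain u :: "real^'n" where u: "u \<noteq> 0" using exists_nonzero_vec by blast
  obtain v where v: "norm v = 1" and ev: "D *v v = (v \<bullet> (D *v v)) *\<^sub>R v"
    and vm: "\<forall>x. x \<bullet> (D *v x) \<le> (v \<bullet> (D *v v)) * (norm x)\<^sup>2"
    using eig_exists[OF Ds subspace_UNIV, of u] u by auto
  define m where "m = v \<bullet> (D *v v)"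
  have "m \<le> 0"
  proof (rule ccontr)
    assume "\<not> m \<le> 0"
    hence m0: "m > 0" by simp
    have z: "R ** D + D ** S = 0"
      unfolding D_def by (simp add: matrix_diff_ldistrib matrix_diff_rdistrib matrix_mul_assoc RS)
    have "v \<bullet> ((R ** D + D ** S) *v v) = 0" unfolding z by simp
    moreover have "v \<bullet> ((R ** D + D ** S) *v v) = m * (v \<bullet> (R *v v)) + m * (v \<bullet> (S *v v))"
    proof -
      have "v \<bullet> ((R ** D + D ** S) *v v) = v \<bullet> (R *v (D *v v)) + v \<bullet> (D *v (S *v v))"
        by (simp add: matrix_vector_mult_add_rdistrib matrix_vector_mul_assoc inner_add_right)
      also have "v \<bullet> (D *v (S *v v)) = (S *v v) \<bullet> (D *v v)" by (rule sym_inner[OF Ds])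
      finally show ?thesis using ev unfolding m_def[symmetric]
        by (simp add: matrix_vector_mult_scaleR inner_commute[of "S *v v"])
    qed
    ultimately have "m * (v \<bullet> (R *v v) + v \<bullet> (S *v v)) = 0" by (simp add: algebra_simps)
    hence sum0: "v \<bullet> (R *v v) + v \<bullet> (S *v v) = 0" using m0 by simp
    have "0 \<le> v \<bullet> (R *v v)" "0 \<le> v \<bullet> (S *v v)" using R S by (auto simp: pos_semidef_def)
    hence "v \<bullet> (R *v v) = 0" "v \<bullet> (S *v v) = 0" using sum0 by linarith+
    hence "R *v v = 0" "S *v v = 0" using psd_kernel R S by blast+
    hence "D *v v = 0" unfolding D_def by (simp add: matrix_vector_mult_diff_rdistrib)
    hence "m *\<^sub>R v = 0" using ev m_def by simp
    thus False using m0 v by auto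
  qed
  hence "x \<bullet> (D *v x) \<le> 0" using vm[rule_format, of x] m_def
    by (smt (verit) mult_nonpos_nonneg zero_le_power2)
  thus ?thesis unfolding D_def .
qed

lemma sqrt_unique:
  fixes R S :: "real^'n^'n"
  assumes R: "pos_semidef R" and S: "pos_semidef S" and RS: "R ** R = S ** S"
  shows "R = S"
proof -
  define D where "D = R - S"
  have Rs: "transpose R = R" and Ss: "transpose S = S" using R S by (auto simp: pos_semidef_def sym_mat_def)
  have Ds: "transpose D = D" unfolding D_def by (simp add: transpose_diff Rs Ss)
  have z: "x \<bullet> (D *v x) = 0" for x
  proof -
    have "x \<bullet> ((R - S) *v x) \<le> 0" by (rule sqrt_half[OF R S RS])
    moreover have "x \<bullet> ((S - R) *v x) \<le> 0" by (rule sqrt_half[OF S R RS[symmetric]])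
    moreover have "(S - R) *v x = - ((R - S) *v x)" by (simp add: matrix_vector_mult_diff_rdistrib)
    ultimately show ?thesis unfolding D_def by simp
  qed
  have "D *v x = 0" for x
  proof -
    have "(D *v x) \<bullet> (D *v x) = 0"
      by (rule form_zero[OF Ds subspace_UNIV]) (use z in auto)
    thus ?thesis by simp
  qed
  hence "D = 0" by (simp add: matrix_eq)
  thus ?thesis unfolding D_def by simp
qed



lemma mv_sum: "(A::real^'n^'m) *v (\<Sum>b\<in>B. f b) = (\<Sum>b\<in>B. A *v f b)"
  by (induction B rule: infinite_finite_induct) (simp_all add: matrix_vector_right_distrib)

lemma ortho_delta:
  fixes B :: "(real^'n) set"
  assumes po: "pairwise orthogonal B" and nb: "\<forall>b\<in>B. norm b = 1" and fin: "finite B" and c: "c \<in> B"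
  shows "(\<Sum>b\<in>B. g b * (c \<bullet> b)) = g c"
proof -
  have "(\<Sum>b\<in>B. g b * (c \<bullet> b)) = (\<Sum>b\<in>B. if b = c then g c else 0)"
  proof (rule sum.cong)
    fix b assume b: "b \<in> B"
    show "g b * (c \<bullet> b) = (if b = c then g c else 0)"
    proof (cases "b = c")
      case True
      have "c \<bullet> c = 1" using nb c norm_eq_1 by blast
      thus ?thesis using True by simp
    next
      case False
      hence "orthogonal c b" using pairwiseD(1)[OF po c b] by simp
      thus ?thesis using False by (simp add: orthogonal_def)
    qed
  qed simp
  also have "\<dots> = g c" using fin c by simp
  finally show ?thesis .
qed

lemma sqrt_exists:
  fixes A :: "real^'n^'n"
  assumes A: "pos_semidef A"
  shows "\<exists>R. pos_semidef R \<and> R ** R = A"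
proof -
  have As: "transpose A = A" using A by (simp add: pos_semidef_def sym_mat_def)
  define ok where "ok B \<longleftrightarrow> pairwise orthogonal B \<and> (\<forall>b\<in>B. norm b = 1 \<and> A *v b = (b \<bullet> (A *v b)) *\<^sub>R b)" for B :: "(real^'n) set"
  have okfin: "finite B \<and> card B \<le> DIM(real^'n)" if "ok B" for B
  proof -
    have "0 \<notin> B" using that unfolding ok_def by force
    hence "independent B" using that unfolding ok_def by (intro pairwise_orthogonal_independent) auto
    thus ?thesis by (rule independent_bound)
  qed
  define Cs where "Cs = {card B | B. ok B}"
  have sub: "Cs \<subseteq> {..DIM(real^'n)}"
  proof
    fix k assume "k \<in> Cs"
    then obtain B0 where "k = card B0" "ok B0" unfolding Cs_def by blast
    thus "k \<in> {..DIM(real^'n)}" using okfin[of B0] by simp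
  qed
  have Csf: "finite Cs" by (rule finite_subset[OF sub]) simp
  have "ok {}" unfolding ok_def by simp
  hence Csne: "Cs \<noteq> {}" unfolding Cs_def by blast
  have "Max Cs \<in> Cs" using Max_in[OF Csf Csne] .
  hence "\<exists>B. ok B \<and> card B = Max Cs" unfolding Cs_def by auto
  then obtain B where okB: "ok B" and cardB: "card B = Max Cs" by blast
  have maxB: "card B' \<le> card B" if "ok B'" for B'
  proof -
    have "card B' \<in> Cs" unfolding Cs_def using that by auto
    thus ?thesis using Max_ge[OF Csf] cardB by simp
  qed
  have finB: "finite B" using okfin[OF okB] by blast
  have poB: "pairwise orthogonal B" and nB: "\<forall>b\<in>B. norm b = 1"
    and eB: "\<forall>b\<in>B. A *v b = (b \<bullet> (A *v b)) *\<^sub>R b" using okB unfolding ok_def by auto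
  have expand: "x = (\<Sum>b\<in>B. (b \<bullet> x) *\<^sub>R b)" for x
  proof (rule ccontr)
    assume ne: "x \<noteq> (\<Sum>b\<in>B. (b \<bullet> x) *\<^sub>R b)"
    define z where "z = x - (\<Sum>b\<in>B. (b \<bullet> x) *\<^sub>R b)"
    define W where "W = {y. \<forall>b\<in>B. b \<bullet> y = 0}"
    have z0: "z \<noteq> 0" using ne unfolding z_def by simp
    have W: "subspace W" unfolding W_def subspace_def by (simp add: inner_add_right)
    have zW: "z \<in> W" unfolding W_def mem_Collect_eq
    proof (rule ballI)
      fix c assume c: "c \<in> B"
      have "c \<bullet> (\<Sum>b\<in>B. (b \<bullet> x) *\<^sub>R b) = (\<Sum>b\<in>B. (b \<bullet> x) * (c \<bullet> b))"
        by (simp add: inner_sum_right)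
      also have "\<dots> = c \<bullet> x" by (rule ortho_delta[OF poB nB finB c])
      finally show "c \<bullet> z = 0" unfolding z_def by (simp add: inner_diff_right)
    qed
    have inv: "\<forall>y\<in>W. A *v y \<in> W"
    proof (intro ballI)
      fix y assume y: "y \<in> W"
      { fix b assume b: "b \<in> B"
        have "b \<bullet> (A *v y) = y \<bullet> (A *v b)" by (rule sym_inner[OF As])
        also have "\<dots> = (b \<bullet> (A *v b)) * (y \<bullet> b)" using eB b by (metis inner_scaleR_right)
        also have "\<dots> = 0" using y b unfolding W_def by (simp add: inner_commute)
        finally have "b \<bullet> (A *v y) = 0" . }
      thus "A *v y \<in> W" unfolding W_def by blast
    qed
    obtain v where vW: "v \<in> W" and nv: "norm v = 1" and ev: "A *v v = (v \<bullet> (A *v v)) *\<^sub>R v"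
      using eig_exists[OF As W zW z0 inv] by blast
    have vB: "v \<notin> B"
    proof
      assume "v \<in> B"
      hence "v \<bullet> v = 0" using vW unfolding W_def by blast
      thus False using nv by simp
    qed
    have "ok (insert v B)"
      unfolding ok_def
    proof (intro conjI)
      show "pairwise orthogonal (insert v B)"
        unfolding pairwise_insert using poB vW unfolding W_def
        by (auto simp: orthogonal_def inner_commute)
      show "\<forall>b\<in>insert v B. norm b = 1 \<and> A *v b = (b \<bullet> (A *v b)) *\<^sub>R b"
        using nB eB nv ev by auto
    qed
    hence "card (insert v B) \<le> card B" by (rule maxB)
    thus False using finB vB by simp
  qed
  define lam where "lam b = b \<bullet> (A *v b)" for b
  have lam0: "0 \<le> lam b" for b using A unfolding lam_def pos_semidef_def by blast
  define R :: "real^'n^'n" where "R = (\<chi> i j. \<Sum>b\<in>B. sqrt (lam b) * (b $ i * b $ j))"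
  have Rv: "R *v y = (\<Sum>b\<in>B. (sqrt (lam b) * (b \<bullet> y)) *\<^sub>R b)" for y
  proof -
    have "(R *v y) $ i = (\<Sum>b\<in>B. sqrt (lam b) * (b \<bullet> y) * b $ i)" for i
    proof -
      have "(R *v y) $ i = (\<Sum>j\<in>UNIV. \<Sum>b\<in>B. sqrt (lam b) * (b $ i * b $ j) * y $ j)"
        unfolding R_def matrix_vector_mult_def by (simp add: sum_distrib_right)
      also have "\<dots> = (\<Sum>b\<in>B. \<Sum>j\<in>UNIV. sqrt (lam b) * b $ i * (b $ j * y $ j))"
        by (subst sum.swap) (simp add: mult_ac)
      also have "\<dots> = (\<Sum>b\<in>B. sqrt (lam b) * (b \<bullet> y) * b $ i)"
        by (simp add: inner_vec_def sum_distrib_left mult_ac)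
      finally show ?thesis .
    qed
    thus ?thesis by (simp add: vec_eq_iff)
  qed
  have cRv: "c \<bullet> (R *v y) = sqrt (lam c) * (c \<bullet> y)" if c: "c \<in> B" for c y
  proof -
    have "c \<bullet> (R *v y) = (\<Sum>b\<in>B. (sqrt (lam b) * (b \<bullet> y)) * (c \<bullet> b))"
      unfolding Rv by (simp add: inner_sum_right)
    also have "\<dots> = sqrt (lam c) * (c \<bullet> y)" by (rule ortho_delta[OF poB nB finB c])
    finally show ?thesis .
  qed
  have RR: "R ** R = A"
  proof (subst matrix_eq, intro allI)
    fix x
    have "(R ** R) *v x = R *v (R *v x)" by (simp add: matrix_vector_mul_assoc)
    also have "\<dots> = (\<Sum>b\<in>B. (sqrt (lam b) * (b \<bullet> (R *v x))) *\<^sub>R b)" by (rule Rv)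
    also have "\<dots> = (\<Sum>b\<in>B. (b \<bullet> x) *\<^sub>R (A *v b))"
    proof (rule sum.cong)
      fix b assume b: "b \<in> B"
      have "sqrt (lam b) * (b \<bullet> (R *v x)) = lam b * (b \<bullet> x)"
        using cRv[OF b] lam0[of b] by (simp add: mult.assoc[symmetric] real_sqrt_mult_self)
      moreover have "A *v b = lam b *\<^sub>R b" using eB b unfolding lam_def by blast
      ultimately show "(sqrt (lam b) * (b \<bullet> (R *v x))) *\<^sub>R b = (b \<bullet> x) *\<^sub>R (A *v b)"
        by (simp add: mult.commute)
    qed simp
    also have "\<dots> = A *v (\<Sum>b\<in>B. (b \<bullet> x) *\<^sub>R b)" by (simp add: mv_sum matrix_vector_mult_scaleR)
    also have "\<dots> = A *v x" using expand[of x] by simp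
    finally show "(R ** R) *v x = A *v x" .
  qed
  have Rs: "sym_mat R" unfolding sym_mat_def R_def transpose_def by (simp add: vec_eq_iff mult.commute)
  have Rp: "0 \<le> x \<bullet> (R *v x)" for x
  proof -
    have "x \<bullet> (R *v x) = (\<Sum>b\<in>B. sqrt (lam b) * ((b \<bullet> x) * (b \<bullet> x)))"
      unfolding Rv by (simp add: inner_sum_right inner_commute[of x] mult.assoc)
    also have "\<dots> \<ge> 0" by (intro sum_nonneg mult_nonneg_nonneg zero_le_square) (simp_all add: lam0)
    finally show ?thesis .
  qed
  have "pos_semidef R" unfolding pos_semidef_def using Rs Rp by blast
  thus ?thesis using RR by blast
qed

lemma mat_sqrt_prop:
  fixes A :: "real^'n^'n"
  assumes "pos_semidef A"
  shows "transpose (mat_sqrt A) ** mat_sqrt A = A"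
proof -
  have ex1: "\<exists>!R. pos_semidef R \<and> R ** R = A"
    using sqrt_exists[OF assms] sqrt_unique by blast
  have "pos_semidef (mat_sqrt A) \<and> mat_sqrt A ** mat_sqrt A = A"
    unfolding mat_sqrt_def by (rule theI'[OF ex1])
  thus ?thesis by (simp add: pos_semidef_def sym_mat_def)
qed



lemma posdef_invertible:
  fixes M :: "real^'n^'n"
  assumes "\<forall>x. x \<noteq> 0 \<longrightarrow> x \<bullet> (M *v x) > 0"
  shows "invertible M"
proof -
  have "inj ((*v) M)"
  proof (rule injI)
    fix x y assume "M *v x = M *v y"
    hence "M *v (x - y) = 0" by (simp add: matrix_vector_mult_diff_distrib)
    hence "(x - y) \<bullet> (M *v (x - y)) = 0" by simp
    thus "x = y" using assms by (metis less_irrefl right_minus_eq)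
  qed
  hence "\<exists>B. B ** M = mat 1" using matrix_left_invertible_injective by blast
  thus ?thesis using invertible_left_inverse by blast
qed

lemma gram_form: "x \<bullet> ((transpose X ** X) *v x) = (X *v x) \<bullet> (X *v (x::real^'d))"
proof -
  have e: "(transpose X ** X) *v x = (X *v x) v* X"
    by (simp add: matrix_vector_mul_assoc[symmetric])
  have "x \<bullet> ((transpose X ** X) *v x) = ((X *v x) v* X) \<bullet> x"
    unfolding e by (rule inner_commute)
  also have "\<dots> = (X *v x) \<bullet> (X *v x)" by (rule dot_lmul_matrix)
  finally show ?thesis .
qed

theorem lemma3:
  fixes X :: "real^'d^'n" and \<Sigma> :: "real^'d^'d" and \<sigma> \<rho> :: real
  assumes "CARD('d) \<ge> CARD('n)"
    and "invertible (X ** transpose X)"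
    and "pos_def \<Sigma>"
    and "\<sigma> > 0"
    and "\<rho> \<ge> 0"
    and "pos_def (\<Sigma> - (\<rho> / real CARD('d)) *\<^sub>R (transpose X ** X))"
  shows "riskP \<sigma> X (Aopt \<sigma> X \<rho> \<Sigma>) \<Sigma> - riskP \<sigma> X (Aopt \<sigma> X 0 \<Sigma>) \<Sigma> =
           (\<rho>\<^sup>2 * \<sigma> ^ 4 / real CARD('d)) *
           trace (matrix_inv (\<Sigma> - (\<rho> / real CARD('d)) *\<^sub>R (transpose X ** X)) ** \<Sigma>
                  ** matrix_inv (\<Sigma> - (\<rho> / real CARD('d)) *\<^sub>R (transpose X ** X))
                  ** (transpose X ** X)
                  ** matrix_inv (transpose X ** X + (real CARD('d) * \<sigma>\<^sup>2) *\<^sub>R mat 1))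
         \<and> riskT \<sigma> X (Aopt \<sigma> X \<rho> \<Sigma>) \<Sigma> =
           (real CARD('d) * \<sigma> ^ 4 / real CARD('n)) *
           trace (\<Sigma> ** matrix_inv (\<Sigma> - (\<rho> / real CARD('d)) *\<^sub>R (transpose X ** X))
                  ** (transpose X ** X)
                  ** matrix_inv (\<Sigma> - (\<rho> / real CARD('d)) *\<^sub>R (transpose X ** X))
                  ** \<Sigma> ** pinv (transpose X ** X)
                  ** matrix_inv (transpose X ** X + (real CARD('d) * \<sigma>\<^sup>2) *\<^sub>R mat 1))"
proof -
  note XX = assms(2) and Sp = assms(3) and sp = assms(4) and Mp = assms(6)
  define d where "d = real CARD('d)"
  define c where "c = d * \<sigma>\<^sup>2"
  define G where "G = transpose X ** X"
  define Mm where "Mm = \<Sigma> - (\<rho> / d) *\<^sub>R G"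
  define N where "N = matrix_inv Mm"
  define K where "K = matrix_inv (G + c *\<^sub>R mat 1)"
  define V where "V = matrix_inv (X ** transpose X)"
  have d0: "d > 0" unfolding d_def by simp
  have c0: "c > 0" unfolding c_def using d0 sp by simp
  have Ss: "transpose \<Sigma> = \<Sigma>" using Sp by (simp add: pos_def_def sym_mat_def)
  have Spsd: "pos_semidef \<Sigma>" using Sp unfolding pos_def_def pos_semidef_def
    by (metis order_refl less_imp_le inner_zero_left)
  have Gs: "transpose G = G" unfolding G_def by (simp add: matrix_transpose_mul)
  have Minv: "invertible Mm" using Mp unfolding pos_def_def Mm_def d_def G_def
    by (intro posdef_invertible) blast
  have NM: "N ** Mm = mat 1" unfolding N_def by (rule invertible_inv(2)[OF Minv])
  have MN: "Mm ** N = mat 1" unfolding N_def by (rule invertible_inv(1)[OF Minv])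
  have Ms: "transpose Mm = Mm" unfolding Mm_def by (simp add: transpose_diff transpose_scalar Ss Gs)
  have Ns: "transpose N = N" by (rule inv_sym[OF MN Ms])
  have Hinv: "invertible (G + c *\<^sub>R mat 1)"
  proof (rule posdef_invertible, intro allI impI)
    fix x :: "real^'d" assume x: "x \<noteq> 0"
    have "x \<bullet> ((G + c *\<^sub>R mat 1) *v x) = (X *v x) \<bullet> (X *v x) + c * (x \<bullet> x)"
      unfolding G_def by (simp add: matrix_vector_mult_add_rdistrib inner_add_right gram_form
          mat1_scaleR mat_vec)
    moreover have "0 \<le> (X *v x) \<bullet> (X *v x)" by simp
    moreover have "x \<bullet> x > 0" using x by simp
    ultimately show "x \<bullet> ((G + c *\<^sub>R mat 1) *v x) > 0" using c0 by (simp add: add_nonneg_pos)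
  qed
  have KG: "K ** (G + c *\<^sub>R mat 1) = mat 1" unfolding K_def by (rule invertible_inv(2)[OF Hinv])
  have GK: "(G + c *\<^sub>R mat 1) ** K = mat 1" unfolding K_def by (rule invertible_inv(1)[OF Hinv])
  have Hs: "transpose (G + c *\<^sub>R mat 1) = G + c *\<^sub>R mat 1" by (simp add: transpose_add transpose_scalar Gs)
  have Ks: "transpose K = K" by (rule inv_sym[OF GK Hs])
  have KGc: "K ** G = G ** K"
  proof -
    have "K ** G + c *\<^sub>R K = G ** K + c *\<^sub>R K"
      using KG GK by (simp add: matrix_add_ldistrib matrix_add_rdistrib' mm_scaleR_left mm_scaleR_right)
    thus ?thesis by simp
  qed
  have V1: "V ** (X ** transpose X) = mat 1" unfolding V_def by (rule invertible_inv(2)[OF XX])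
  have V2: "(X ** transpose X) ** V = mat 1" unfolding V_def by (rule invertible_inv(1)[OF XX])
  have XXs: "transpose (X ** transpose X) = X ** transpose X" by (simp add: matrix_transpose_mul)
  have Vs: "transpose V = V" by (rule inv_sym[OF V2 XXs])
  have R: "transpose (mat_sqrt \<Sigma>) ** mat_sqrt \<Sigma> = \<Sigma>" by (rule mat_sqrt_prop[OF Spsd])
  have Aeq: "Aopt \<sigma> X \<rho> \<Sigma> = (mat 1 - (\<rho> * \<sigma>\<^sup>2) *\<^sub>R N) ** K ** transpose X"
    unfolding Aopt_def N_def K_def Mm_def G_def c_def d_def ..
  have A0: "Aopt \<sigma> X 0 \<Sigma> = mat 1 ** K ** transpose X"
    unfolding Aopt_def K_def G_def c_def d_def by simp
  have f1: "real CARD('d) * riskP \<sigma> X (Aopt \<sigma> X \<rho> \<Sigma>) \<Sigma> =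
     trace (transpose (mat 1 - (\<rho> * \<sigma>\<^sup>2) *\<^sub>R N) ** \<Sigma> ** (mat 1 - (\<rho> * \<sigma>\<^sup>2) *\<^sub>R N) ** (K ** G))
     - 2 * trace (\<Sigma> ** (mat 1 - (\<rho> * \<sigma>\<^sup>2) *\<^sub>R N) ** (K ** G)) + trace \<Sigma>"
    unfolding Aeq G_def by (rule riskP_formula[OF R _ _ Ks Ss]) (use KG GK in \<open>simp_all add: G_def c_def d_def\<close>)
  have f0: "real CARD('d) * riskP \<sigma> X (Aopt \<sigma> X 0 \<Sigma>) \<Sigma> =
     trace (transpose (mat 1) ** \<Sigma> ** mat 1 ** (K ** G))
     - 2 * trace (\<Sigma> ** mat 1 ** (K ** G)) + trace \<Sigma>"
    unfolding A0 G_def by (rule riskP_formula[OF R _ _ Ks Ss]) (use KG GK in \<open>simp_all add: G_def c_def d_def\<close>)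
  have pd: "real CARD('d) * riskP \<sigma> X (Aopt \<sigma> X \<rho> \<Sigma>) \<Sigma> - real CARD('d) * riskP \<sigma> X (Aopt \<sigma> X 0 \<Sigma>) \<Sigma>
      = (\<rho> * \<sigma>\<^sup>2)\<^sup>2 * trace (N ** \<Sigma> ** N ** G ** K)"
    unfolding f1 f0 by (rule P_diff[OF Ns Ss Ks Gs KGc])
  have part1: "riskP \<sigma> X (Aopt \<sigma> X \<rho> \<Sigma>) \<Sigma> - riskP \<sigma> X (Aopt \<sigma> X 0 \<Sigma>) \<Sigma>
      = (\<rho>\<^sup>2 * \<sigma> ^ 4 / d) * trace (N ** \<Sigma> ** N ** G ** K)"
  proof -
    have "d * (riskP \<sigma> X (Aopt \<sigma> X \<rho> \<Sigma>) \<Sigma> - riskP \<sigma> X (Aopt \<sigma> X 0 \<Sigma>) \<Sigma>)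
        = (\<rho> * \<sigma>\<^sup>2)\<^sup>2 * trace (N ** \<Sigma> ** N ** G ** K)"
      using pd unfolding d_def by (simp add: right_diff_distrib)
    thus ?thesis using d0 by (simp add: field_simps power2_eq_square power4_eq_xxxx)
  qed
  have tf: "real CARD('n) * real CARD('d) * riskT \<sigma> X ((mat 1 - (\<rho> * \<sigma>\<^sup>2) *\<^sub>R N) ** K ** transpose X) \<Sigma>
     = c\<^sup>2 * trace (\<Sigma> ** N ** G ** N ** \<Sigma> ** (transpose X ** V ** V ** X) ** K)"
    unfolding G_def c_def d_def
    by (rule T_formula[OF V1 V2 Vs _ _ Ks _ Ns Ss]) (use KG GK NM in \<open>simp_all add: G_def c_def d_def Mm_def\<close>)
  have pinvG: "pinv G = transpose X ** V ** V ** X" unfolding G_def by (rule pinv_gram[OF V1 V2 Vs])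
  have part2: "riskT \<sigma> X (Aopt \<sigma> X \<rho> \<Sigma>) \<Sigma> =
      (d * \<sigma> ^ 4 / real CARD('n)) * trace (\<Sigma> ** N ** G ** N ** \<Sigma> ** pinv G ** K)"
  proof -
    have n0: "real CARD('n) > 0" by simp
    show ?thesis using tf d0 n0 unfolding Aeq[symmetric] pinvG c_def d_def
      by (simp add: field_simps power2_eq_square power4_eq_xxxx)
  qed
  show ?thesis using part1 part2 unfolding N_def K_def Mm_def G_def c_def d_def by simp
qed

end
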